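(* Let $p$ be a prime, $H_p=\mathbb{Z}[1/p]$, and for $\lambda\in(0,\infty)$ let $f_+(\lambda)=\sum_{m=0}^\infty\max(0,1-p^m\lambda)$, $f_-(\lambda)=\sum_{m=1}^\infty\max(0,p^{-m}\lambda-1)$. (i) The functions $f_\pm$ are convex, continuous, piecewise affine with slopes in $H_p$, and $f_+(p\lambda)-f_+(\lambda)=-\max(0,1-\lambda)$, $f_-(p\lambda)-f_-(\lambda)=\max(0,\lambda-1)$. (ii) The function $\theta=f_++f_-$ on $(0,\infty)$ is convex, continuous, piecewise affine with slopes in $H_p$, and satisfies $\theta(p\lambda)=\theta(\lambda)+\lambda-1$ for all $\lambda\in(0,\infty)$. (iii) For all $\lambda\in(0,\infty)$, $\left|\theta(\lambda)-\left(\frac{1}{p-1}\lambda-\frac{\log\lambda}{\log p}\right)\right|\leq1$. *)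

theory Defs
  imports "HOL-Analysis.Analysis"
begin

definition Hp :: "nat \<Rightarrow> real set" where
  "Hp p = {of_int k / (real p) ^ n | k n. True}"

definition f_plus :: "nat \<Rightarrow> real \<Rightarrow> real" where
  "f_plus p lam = (\<Sum>m. max 0 (1 - (real p) ^ m * lam))"

definition f_minus :: "nat \<Rightarrow> real \<Rightarrow> real" where
  "f_minus p lam = (\<Sum>m. max 0 (lam / (real p) ^ (Suc m) - 1))"

definition theta :: "nat \<Rightarrow> real \<Rightarrow> real" where
  "theta p lam = f_plus p lam + f_minus p lam"

text \<open>f is piecewise affine on the open set S (an interval) with slopes in H:
  every compact subinterval [a,b] of S splits into finitely many closed subintervals
  on each of which f is affine with slope in H (breakpoints may accumulate at the
  boundary of S).\<close>
definition piecewise_affine_slopes_in :: "real set \<Rightarrow> real set \<Rightarrow> (real \<Rightarrow> real) \<Rightarrow> bool" where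
  "piecewise_affine_slopes_in H S f \<longleftrightarrow>
     (\<forall>a b. a < b \<and> {a..b} \<subseteq> S \<longrightarrow>
        (\<exists>(n::nat) (x::nat \<Rightarrow> real) (c::nat \<Rightarrow> real) (d::nat \<Rightarrow> real).
           x 0 = a \<and> x n = b \<and> (\<forall>i<n. x i < x (Suc i)) \<and>
           (\<forall>i<n. c i \<in> H \<and> (\<forall>t\<in>{x i..x (Suc i)}. f t = c i * t + d i))))"

end

theory Submission
  imports Defs
begin


lemma cvx_maxaff: "convex_on UNIV (\<lambda>t::real. max 0 (\<alpha> + \<beta> * t))"
proof (rule convex_onI)
  fix t x y :: real assume t: "0<t" "t<1"
  have e: "\<alpha> + \<beta>*((1-t)*\<^sub>R x + t*\<^sub>R y) = (1-t)*(\<alpha>+\<beta>*x) + t*(\<alpha>+\<beta>*y)"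
    by (simp add: algebra_simps)
  have 1: "(1-t)*(\<alpha>+\<beta>*x) \<le> (1-t)*max 0 (\<alpha>+\<beta>*x)" using t by (intro mult_left_mono) auto
  have 2: "t*(\<alpha>+\<beta>*y) \<le> t*max 0 (\<alpha>+\<beta>*y)" using t by (intro mult_left_mono) auto
  have 3: "0 \<le> (1-t)*max 0 (\<alpha>+\<beta>*x)" "0 \<le> t*max 0 (\<alpha>+\<beta>*y)" using t by auto
  show "max 0 (\<alpha> + \<beta> * ((1 - t) *\<^sub>R x + t *\<^sub>R y)) \<le> (1 - t) * max 0 (\<alpha> + \<beta> * x) + t * max 0 (\<alpha> + \<beta> * y)"
    unfolding e using 1 2 3 by linarith
qed auto

lemma cvx_sum: "finite I \<Longrightarrow> convex S \<Longrightarrow> (\<And>i. i\<in>I \<Longrightarrow> convex_on S (f i)) \<Longrightarrow> convex_on S (\<lambda>x. \<Sum>i\<in>I. f i x)"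
  by (induction I rule: finite_induct) (auto simp: convex_on_const intro!: convex_on_add)

lemma cvx_cong: "convex_on S g \<Longrightarrow> (\<And>x. x\<in>S \<Longrightarrow> f x = g x) \<Longrightarrow> convex_on S f"
  unfolding convex_on_def convex_def by auto

lemma cvx_local:
  assumes "convex S" "\<And>x y. x\<in>S \<Longrightarrow> y\<in>S \<Longrightarrow> \<exists>T. convex_on T f \<and> x\<in>T \<and> y\<in>T"
  shows "convex_on S f"
  unfolding convex_on_def
proof (intro conjI assms ballI allI impI)
  fix x y and u v :: real assume xy: "x\<in>S" "y\<in>S" and uv: "0\<le>u" "0\<le>v" "u+v=1"
  obtain T where "convex_on T f" "x\<in>T" "y\<in>T" using assms(2)[OF xy] by blast
  then show "f (u *\<^sub>R x + v *\<^sub>R y) \<le> u * f x + v * f y" using uv unfolding convex_on_def by blast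
qed

lemma fplus_fin:
  assumes p: "real p \<ge> 2" and a: "a > 0"
  obtains M where "\<And>t. t \<ge> a \<Longrightarrow> f_plus p t = (\<Sum>m<M. max 0 (1 - real p^m * t))"
proof -
  obtain M where M: "1/a < real p ^ M" using real_arch_pow[of "real p" "1/a"] p by auto
  have "f_plus p t = (\<Sum>m<M. max 0 (1 - real p^m * t))" if t: "t \<ge> a" for t
    unfolding f_plus_def
  proof (rule suminf_finite)
    fix m assume "m \<notin> {..<M}"
    hence "real p ^ M \<le> real p ^ m" using p by (intro power_increasing) auto
    hence "1/a < real p ^ m" using M by linarith
    hence "1 < real p ^ m * a" using a by (simp add: field_simps)
    also have "\<dots> \<le> real p ^ m * t" using t p by (intro mult_left_mono) auto
    finally show "max 0 (1 - real p ^ m * t) = 0" by simp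
  qed auto
  thus ?thesis using that by blast
qed

lemma fminus_fin:
  assumes p: "real p \<ge> 2"
  obtains M where "\<And>t. t \<le> b \<Longrightarrow> f_minus p t = (\<Sum>m<M. max 0 (t / real p^Suc m - 1))"
proof -
  obtain M where M: "b < real p ^ M" using real_arch_pow[of "real p" "b"] p by auto
  have "f_minus p t = (\<Sum>m<M. max 0 (t / real p^Suc m - 1))" if t: "t \<le> b" for t
    unfolding f_minus_def
  proof (rule suminf_finite)
    fix m assume "m \<notin> {..<M}"
    hence "real p ^ M \<le> real p ^ Suc m" using p by (intro power_increasing) auto
    hence "t < real p ^ Suc m" using M t by linarith
    hence "t / real p ^ Suc m \<le> 1" using p by (simp add: field_simps)
    thus "max 0 (t / real p ^ Suc m - 1) = 0" by simp
  qed auto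
  thus ?thesis using that by blast
qed

lemma fplus_cvx: assumes p: "real p \<ge> 2" shows "convex_on {0<..} (f_plus p)"
proof (rule cvx_local)
  fix x y :: real assume xy: "x \<in> {0<..}" "y \<in> {0<..}"
  obtain M where M: "\<And>t. t \<ge> min x y \<Longrightarrow> f_plus p t = (\<Sum>m<M. max 0 (1 - real p^m * t))"
    using fplus_fin[OF p, of "min x y"] xy by auto
  have "convex_on {min x y..} (\<lambda>t. \<Sum>m<M. max 0 (1 - real p^m * t))"
    by (intro cvx_sum convex_on_subset[OF cvx_maxaff[of 1 "- _"], simplified]) auto
  hence "convex_on {min x y..} (f_plus p)" by (rule cvx_cong) (use M in auto)
  thus "\<exists>T. convex_on T (f_plus p) \<and> x \<in> T \<and> y \<in> T" by auto
qed auto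

lemma fminus_cvx: assumes p: "real p \<ge> 2" shows "convex_on {0<..} (f_minus p)"
proof (rule cvx_local)
  fix x y :: real assume xy: "x \<in> {0<..}" "y \<in> {0<..}"
  obtain M where M: "\<And>t. t \<le> max x y \<Longrightarrow> f_minus p t = (\<Sum>m<M. max 0 (t / real p^Suc m - 1))"
    using fminus_fin[OF p, of "max x y"] by auto
  have "convex_on {..max x y} (\<lambda>t. \<Sum>m<M. max 0 (t / real p^Suc m - 1))"
  proof (intro cvx_sum)
    fix m
    show "convex_on {..max x y} (\<lambda>t. max 0 (t / real p^Suc m - 1))"
      using convex_on_subset[OF cvx_maxaff[of "-1" "1 / real p^Suc m"]] by (simp add: algebra_simps)
  qed auto
  hence "convex_on {..max x y} (f_minus p)" by (rule cvx_cong) (use M in auto)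
  thus "\<exists>T. convex_on T (f_minus p) \<and> x \<in> T \<and> y \<in> T" by auto
qed auto

lemma fplus_summable: assumes p: "real p \<ge> 2" and "lam > 0"
  shows "summable (\<lambda>m. max 0 (1 - real p^m * lam))"
proof -
  obtain M where M: "1/lam < real p ^ M" using real_arch_pow[of "real p" "1/lam"] p by auto
  show ?thesis
  proof (rule summable_finite[of "{..<M}"])
    fix m assume "m \<notin> {..<M}"
    hence "real p ^ M \<le> real p ^ m" using p by (intro power_increasing) auto
    hence "1/lam < real p ^ m" using M by linarith
    hence "1 < real p ^ m * lam" using assms by (simp add: field_simps)
    thus "max 0 (1 - real p ^ m * lam) = 0" by simp
  qed auto
qed

lemma fminus_summable: assumes p: "real p \<ge> 2"
  shows "summable (\<lambda>m. max 0 (lam / real p^m - 1))"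
proof -
  obtain M where M: "lam < real p ^ M" using real_arch_pow[of "real p" "lam"] p by auto
  show ?thesis
  proof (rule summable_finite[of "{..<M}"])
    fix m assume "m \<notin> {..<M}"
    hence "real p ^ M \<le> real p ^ m" using p by (intro power_increasing) auto
    hence "lam < real p ^ m" using M by linarith
    hence "lam / real p ^ m \<le> 1" using p by (simp add: field_simps)
    thus "max 0 (lam / real p ^ m - 1) = 0" by simp
  qed auto
qed

lemma fplus_eq: assumes p: "real p \<ge> 2" and "lam > 0"
  shows "f_plus p (real p * lam) - f_plus p lam = - max 0 (1 - lam)"
proof -
  have "f_plus p (real p * lam) = (\<Sum>m. max 0 (1 - real p^Suc m * lam))"
    unfolding f_plus_def by (simp add: mult.assoc mult.commute mult.left_commute)
  also have "\<dots> = f_plus p lam - max 0 (1 - lam)"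
    unfolding f_plus_def using suminf_split_head[OF fplus_summable[OF assms]] by simp
  finally show ?thesis by simp
qed

lemma fminus_eq: assumes p: "real p \<ge> 2" and "lam > 0"
  shows "f_minus p (real p * lam) - f_minus p lam = max 0 (lam - 1)"
proof -
  have "f_minus p (real p * lam) = (\<Sum>m. max 0 (lam / real p^m - 1))"
    unfolding f_minus_def using p by (simp add: field_simps)
  moreover have "f_minus p lam = (\<Sum>m. max 0 (lam / real p^m - 1)) - max 0 (lam - 1)"
    unfolding f_minus_def using suminf_split_head[OF fminus_summable[OF assms(1)], of lam] by simp
  ultimately show ?thesis by simp
qed



definition PA :: "real set \<Rightarrow> (real\<Rightarrow>real) \<Rightarrow> real \<Rightarrow> real \<Rightarrow> bool" where
  "PA H f a b \<longleftrightarrow> (\<exists>(n::nat) (x::nat \<Rightarrow> real) (c::nat \<Rightarrow> real) (d::nat \<Rightarrow> real).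
           x 0 = a \<and> x n = b \<and> (\<forall>i<n. x i < x (Suc i)) \<and>
           (\<forall>i<n. c i \<in> H \<and> (\<forall>t\<in>{x i..x (Suc i)}. f t = c i * t + d i)))"

definition aff :: "real set \<Rightarrow> (real\<Rightarrow>real) \<Rightarrow> real \<Rightarrow> real \<Rightarrow> bool" where
  "aff H f a b \<longleftrightarrow> (\<exists>c d. c \<in> H \<and> (\<forall>t\<in>{a..b}. f t = c*t+d))"

lemma PA_aff: "a < b \<Longrightarrow> aff H f a b \<Longrightarrow> PA H f a b"
  unfolding PA_def aff_def
  apply (elim exE conjE)
  subgoal for c d
    apply (rule exI[of _ 1], rule exI[of _ "\<lambda>i. if i = 0 then a else b"],
           rule exI[of _ "\<lambda>_. c"], rule exI[of _ "\<lambda>_. d"])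
    by auto
  done

lemma PA_concat:
  assumes "PA H f a q" "PA H f q b" shows "PA H f a b"
proof -
  obtain n1 x1 c1 d1 where 1: "x1 0 = a" "x1 n1 = q" "\<forall>i<n1. x1 i < x1 (Suc i)"
    "\<forall>i<n1. c1 i \<in> H \<and> (\<forall>t\<in>{x1 i..x1 (Suc i)}. f t = c1 i * t + d1 i)"
    using assms(1) unfolding PA_def by blast
  obtain n2 x2 c2 d2 where 2: "x2 0 = q" "x2 n2 = b" "\<forall>i<n2. x2 i < x2 (Suc i)"
    "\<forall>i<n2. c2 i \<in> H \<and> (\<forall>t\<in>{x2 i..x2 (Suc i)}. f t = c2 i * t + d2 i)"
    using assms(2) unfolding PA_def by blast
  define x where "x i = (if i \<le> n1 then x1 i else x2 (i - n1))" for i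
  define c where "c i = (if i < n1 then c1 i else c2 (i - n1))" for i
  define d where "d i = (if i < n1 then d1 i else d2 (i - n1))" for i
  have xr: "x i = x2 (i - n1)" if "i \<ge> n1" for i
    using that 1(2) 2(1) by (cases "i = n1") (auto simp: x_def)
  have A: "x 0 = a" using 1 by (simp add: x_def)
  have B: "x (n1+n2) = b" using xr[of "n1+n2"] 2 by simp
  have C: "x i < x (Suc i) \<and> c i \<in> H \<and> (\<forall>t\<in>{x i..x (Suc i)}. f t = c i * t + d i)"
    if "i < n1 + n2" for i
  proof (cases "i < n1")
    case True
    then show ?thesis using 1 by (simp add: x_def c_def d_def)
  next
    case False
    hence "x i = x2 (i - n1)" "x (Suc i) = x2 (Suc (i - n1))" "i - n1 < n2"
      using xr[of i] xr[of "Suc i"] that by (auto simp: Suc_diff_le)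
    then show ?thesis using 2 False by (simp add: c_def d_def)
  qed
  show ?thesis unfolding PA_def using A B C by blast
qed

lemma pa_gen:
  assumes fin: "\<And>a b. 0 < a \<Longrightarrow> finite (Q \<inter> {a<..<b})"
    and af: "\<And>a b. 0 < a \<Longrightarrow> a < b \<Longrightarrow> Q \<inter> {a<..<b} = {} \<Longrightarrow> aff H f a b"
  shows "piecewise_affine_slopes_in H {0<..} f"
proof -
  have main: "PA H f a b" if "0 < a" "a < b" for a b
    using that
  proof (induction "card (Q \<inter> {a<..<b})" arbitrary: a b rule: less_induct)
    case less
    show ?case
    proof (cases "Q \<inter> {a<..<b} = {}")
      case True
      then show ?thesis using af less PA_aff by blast
    next
      case False
      then obtain q where q: "q \<in> Q" "a < q" "q < b" by auto
      have "Q \<inter> {a<..<q} \<subset> Q \<inter> {a<..<b}" using q by auto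
      hence c1: "card (Q \<inter> {a<..<q}) < card (Q \<inter> {a<..<b})"
        by (rule psubset_card_mono[OF fin[OF less.prems(1)]])
      have "Q \<inter> {q<..<b} \<subset> Q \<inter> {a<..<b}" using q by auto
      hence c2: "card (Q \<inter> {q<..<b}) < card (Q \<inter> {a<..<b})"
        by (rule psubset_card_mono[OF fin[OF less.prems(1)]])
      have "PA H f a q" using less.hyps[OF c1] less.prems q by auto
      moreover have "PA H f q b" using less.hyps[OF c2] less.prems q by auto
      ultimately show ?thesis by (rule PA_concat)
    qed
  qed
  show ?thesis unfolding piecewise_affine_slopes_in_def
  proof (intro allI impI)
    fix a b :: real assume ab: "a < b \<and> {a..b} \<subseteq> {0<..}"
    have "a \<in> {a..b}" using ab by auto
    hence "a \<in> {0<..}" "a < b" using ab by blast+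
    hence "0 < a" "a < b" by auto
    from main[OF this] show "\<exists>n x c d. x 0 = a \<and> x n = b \<and> (\<forall>i<n. x i < x (Suc i)) \<and>
           (\<forall>i<n. c i \<in> H \<and> (\<forall>t\<in>{x i..x (Suc i)}. f t = c i * t + d i))"
      unfolding PA_def .
  qed
qed

lemma aff_sum:
  assumes "0 \<in> H" "\<And>x y. x\<in>H \<Longrightarrow> y\<in>H \<Longrightarrow> x+y \<in> H"
  shows "finite I \<Longrightarrow> (\<And>m. m \<in> I \<Longrightarrow> aff H (g m) a b) \<Longrightarrow> aff H (\<lambda>t. \<Sum>m\<in>I. g m t) a b"
proof (induction I rule: finite_induct)
  case empty
  then show ?case using assms unfolding aff_def by (auto intro!: exI[of _ 0])
next
  case (insert m I)
  obtain c d where cd: "c \<in> H" "\<forall>t\<in>{a..b}. g m t = c*t+d" using insert unfolding aff_def by blast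
  obtain c' d' where cd': "c' \<in> H" "\<forall>t\<in>{a..b}. (\<Sum>m\<in>I. g m t) = c'*t+d'"
    using insert unfolding aff_def by blast
  show ?case unfolding aff_def
    by (rule exI[of _ "c+c'"], rule exI[of _ "d+d'"]) (use insert cd cd' assms in \<open>auto simp: algebra_simps\<close>)
qed

lemma aff_cong: "aff H g a b \<Longrightarrow> (\<And>t. t \<in> {a..b} \<Longrightarrow> f t = g t) \<Longrightarrow> aff H f a b"
  unfolding aff_def by auto

lemma aff_add: "aff H f a b \<Longrightarrow> aff H g a b \<Longrightarrow> (\<And>x y. x\<in>H \<Longrightarrow> y\<in>H \<Longrightarrow> x+y \<in> H) \<Longrightarrow> aff H (\<lambda>t. f t + g t) a b"
proof -
  assume "aff H f a b" "aff H g a b" and h: "\<And>x y. x\<in>H \<Longrightarrow> y\<in>H \<Longrightarrow> x+y \<in> H"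
  then obtain c d c' d' where "c \<in> H" "\<forall>t\<in>{a..b}. f t = c*t+d" "c' \<in> H" "\<forall>t\<in>{a..b}. g t = c'*t+d'"
    unfolding aff_def by blast
  thus ?thesis unfolding aff_def using h
    by (intro exI[of _ "c+c'"] exI[of _ "d+d'"]) (auto simp: algebra_simps)
qed

lemma Hp_add: assumes "p > 0" "x \<in> Hp p" "y \<in> Hp p" shows "x + y \<in> Hp p"
proof -
  obtain k1 n1 k2 n2 where xy: "x = of_int k1 / real p ^ n1" "y = of_int k2 / real p ^ n2"
    using assms unfolding Hp_def by blast
  have "x + y = of_int (k1 * int p ^ n2 + k2 * int p ^ n1) / real p ^ (n1 + n2)"
    unfolding xy using assms(1) by (simp add: field_simps power_add)
  thus ?thesis unfolding Hp_def by blast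
qed

lemma Hp_int: "real_of_int k \<in> Hp p"
proof -
  have "real_of_int k = real_of_int k / real p ^ 0" by simp
  thus ?thesis unfolding Hp_def by blast
qed

lemma Hp_0: "0 \<in> Hp p" using Hp_int[of 0] by simp

lemma Hp_pow: "real p ^ m \<in> Hp p"
  using Hp_int[of "int p ^ m" p] by simp

lemma Hp_npow: "- (real p ^ m) \<in> Hp p"
  using Hp_int[of "(- (int p ^ m))" p] by simp

lemma Hp_inv: "1 / real p ^ m \<in> Hp p"
proof -
  have "1 / real p ^ m = real_of_int 1 / real p ^ m" by simp
  thus ?thesis unfolding Hp_def by blast
qed

definition Q :: "nat \<Rightarrow> real set" where
  "Q p = range (\<lambda>m. real p ^ m) \<union> range (\<lambda>m. 1 / real p ^ m)"

lemma Q_fin: assumes p: "real p \<ge> 2" and a: "0 < a" shows "finite (Q p \<inter> {a<..<b})"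
proof -
  obtain N1 where N1: "b < real p ^ N1" using real_arch_pow[of "real p" b] p by auto
  obtain N2 where N2: "1/a < real p ^ N2" using real_arch_pow[of "real p" "1/a"] p by auto
  have "Q p \<inter> {a<..<b} \<subseteq> (\<lambda>m. real p ^ m) ` {..<N1} \<union> (\<lambda>m. 1 / real p ^ m) ` {..<N2}"
  proof
    fix q assume q: "q \<in> Q p \<inter> {a<..<b}"
    then consider m where "q = real p ^ m" | m where "q = 1 / real p ^ m" unfolding Q_def by auto
    then show "q \<in> (\<lambda>m. real p ^ m) ` {..<N1} \<union> (\<lambda>m. 1 / real p ^ m) ` {..<N2}"
    proof cases
      case (1 m)
      have "m < N1"
      proof (rule ccontr)
        assume "\<not> m < N1"
        hence "real p ^ N1 \<le> real p ^ m" using p by (intro power_increasing) auto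
        thus False using q 1 N1 by auto
      qed
      thus ?thesis using 1 by auto
    next
      case (2 m)
      have "m < N2"
      proof (rule ccontr)
        assume "\<not> m < N2"
        hence "real p ^ N2 \<le> real p ^ m" using p by (intro power_increasing) auto
        hence "1/a < real p ^ m" using N2 by linarith
        hence "1 / real p ^ m < a" using a p by (simp add: field_simps)
        thus False using q 2 by auto
      qed
      thus ?thesis using 2 by auto
    qed
  qed
  thus ?thesis by (rule finite_subset) auto
qed

lemma fplus_aff:
  assumes p: "real p \<ge> 2" and a: "0 < a" and ab: "a < b" and Q: "Q p \<inter> {a<..<b} = {}"
  shows "aff (Hp p) (f_plus p) a b"
proof -
  obtain M where M: "\<And>t. t \<ge> a \<Longrightarrow> f_plus p t = (\<Sum>m<M. max 0 (1 - real p^m * t))"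
    using fplus_fin[OF p a] by blast
  have "aff (Hp p) (\<lambda>t. \<Sum>m<M. max 0 (1 - real p^m * t)) a b"
  proof (rule aff_sum)
    fix m
    show "aff (Hp p) (\<lambda>t. max 0 (1 - real p ^ m * t)) a b"
    proof (cases "real p ^ m * b \<le> 1")
      case True
      have "max 0 (1 - real p ^ m * t) = (- (real p ^ m)) * t + 1" if "t \<in> {a..b}" for t
      proof -
        have "real p ^ m * t \<le> real p ^ m * b" using that p by (intro mult_left_mono) auto
        thus ?thesis using True by simp
      qed
      then show ?thesis unfolding aff_def using Hp_npow by blast
    next
      case False
      have "1 / real p ^ m \<in> Q p" unfolding Q_def by auto
      moreover have "1 / real p ^ m < b" using False p by (simp add: field_simps)
      ultimately have "1 / real p ^ m \<le> a" using Q by force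
      hence "1 \<le> real p ^ m * a" using p by (simp add: field_simps)
      have "max 0 (1 - real p ^ m * t) = 0 * t + 0" if "t \<in> {a..b}" for t
      proof -
        have "real p ^ m * a \<le> real p ^ m * t" using that p by (intro mult_left_mono) auto
        thus ?thesis using \<open>1 \<le> real p ^ m * a\<close> by simp
      qed
      then show ?thesis unfolding aff_def using Hp_0 by blast
    qed
  qed (use Hp_0 Hp_add p in auto)
  thus ?thesis by (rule aff_cong) (use M in auto)
qed

lemma fminus_aff:
  assumes p: "real p \<ge> 2" and a: "0 < a" and ab: "a < b" and Q: "Q p \<inter> {a<..<b} = {}"
  shows "aff (Hp p) (f_minus p) a b"
proof -
  obtain M where M: "\<And>t. t \<le> b \<Longrightarrow> f_minus p t = (\<Sum>m<M. max 0 (t / real p^Suc m - 1))"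
    using fminus_fin[OF p] by blast
  have "aff (Hp p) (\<lambda>t. \<Sum>m<M. max 0 (t / real p^Suc m - 1)) a b"
  proof (rule aff_sum)
    fix m
    show "aff (Hp p) (\<lambda>t. max 0 (t / real p^Suc m - 1)) a b"
    proof (cases "real p ^ Suc m \<le> a")
      case True
      have "max 0 (t / real p^Suc m - 1) = (1 / real p ^ Suc m) * t + (-1)" if "t \<in> {a..b}" for t
      proof -
        have "1 \<le> t / real p^Suc m" using that True p by (simp add: field_simps)
        thus ?thesis by simp
      qed
      then show ?thesis unfolding aff_def using Hp_inv by blast
    next
      case False
      have "real p ^ Suc m \<in> Q p" unfolding Q_def by (intro UnI1 rangeI)
      hence "b \<le> real p ^ Suc m" using Q False by force
      have "max 0 (t / real p^Suc m - 1) = 0 * t + 0" if "t \<in> {a..b}" for t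
      proof -
        have "t / real p^Suc m \<le> 1" using that \<open>b \<le> real p ^ Suc m\<close> p by (simp add: field_simps)
        thus ?thesis by simp
      qed
      then show ?thesis unfolding aff_def using Hp_0 by blast
    qed
  qed (use Hp_0 Hp_add p in auto)
  thus ?thesis by (rule aff_cong) (use M in auto)
qed



lemma theta_eq: assumes p: "real p \<ge> 2" and "lam > 0"
  shows "theta p (real p * lam) = theta p lam + lam - 1"
  using fplus_eq[OF assms] fminus_eq[OF assms] unfolding theta_def by linarith

definition gg :: "nat \<Rightarrow> real \<Rightarrow> real" where
  "gg p lam = theta p lam - (lam / (real p - 1) - ln lam / ln (real p))"

lemma gg_eq: assumes p: "real p \<ge> 2" and l: "lam > 0" shows "gg p (real p * lam) = gg p lam"
proof -
  have lp: "ln (real p) > 0" using p by simp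
  have "ln (real p * lam) = ln (real p) + ln lam" using p l by (simp add: ln_mult)
  moreover have "real p - 1 > 0" using p by simp
  ultimately show ?thesis unfolding gg_def theta_eq[OF assms] using lp
    by (simp add: field_simps)
qed

lemma gg_pow: assumes p: "real p \<ge> 2" and l: "lam > 0" shows "gg p (real p ^ n * lam) = gg p lam"
proof (induction n)
  case (Suc n)
  have "gg p (real p ^ Suc n * lam) = gg p (real p * (real p ^ n * lam))" by (simp add: mult.assoc)
  also have "\<dots> = gg p (real p ^ n * lam)" using p l by (intro gg_eq) auto
  finally show ?case using Suc by simp
qed simp

lemma theta_zero: assumes p: "real p \<ge> 2" and m: "1 \<le> mu" "mu \<le> real p" shows "theta p mu = 0"
proof -
  have "(\<lambda>m. max 0 (1 - real p ^ m * mu)) = (\<lambda>_. 0)"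
  proof
    fix m
    have "1 \<le> real p ^ m" using p by simp
    hence "1 * 1 \<le> real p ^ m * mu" using m by (intro mult_mono) auto
    thus "max 0 (1 - real p ^ m * mu) = 0" by simp
  qed
  moreover have "(\<lambda>m. max 0 (mu / real p ^ Suc m - 1)) = (\<lambda>_. 0)"
  proof
    fix m
    have "real p \<le> real p ^ Suc m" using p by (simp add: power_increasing[of 1 "Suc m", simplified])
    hence "mu \<le> real p ^ Suc m" using m by linarith
    hence "mu / real p ^ Suc m \<le> 1" using p by (simp add: field_simps)
    thus "max 0 (mu / real p ^ Suc m - 1) = 0" by simp
  qed
  ultimately show ?thesis unfolding theta_def f_plus_def f_minus_def by simp
qed

lemma gg_base: assumes p: "real p \<ge> 2" and m: "1 \<le> mu" "mu \<le> real p" shows "\<bar>gg p mu\<bar> \<le> 1"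
proof -
  have lp: "ln (real p) > 0" using p by simp
  have p1: "real p - 1 > 0" using p by simp
  define t where "t = (mu - 1) / (real p - 1)"
  have t: "0 \<le> t" "t \<le> 1" using m p1 by (auto simp: t_def field_simps)
  have tt: "t*(real p - 1) = mu - 1" using p1 by (simp add: t_def)
  have "(1 - t) *\<^sub>R 1 + t *\<^sub>R real p = 1 + t*(real p - 1)" by (simp add: algebra_simps)
  also have "\<dots> = mu" using tt by simp
  finally have "(1 - t) *\<^sub>R 1 + t *\<^sub>R real p = mu" .
  hence "(1 - t) * ln 1 + t * ln (real p) \<le> ln mu"
    using concave_onD[OF ln_concave, of t 1 "real p"] t p by auto
  hence "t * ln (real p) \<le> ln mu" by simp
  hence A: "t \<le> ln mu / ln (real p)" using lp by (simp add: field_simps)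
  have "ln mu \<le> ln (real p)" using m by simp
  hence B: "ln mu / ln (real p) \<le> 1" using lp by simp
  have C: "0 \<le> mu / (real p - 1)" using m p1 by simp
  have D: "mu / (real p - 1) - t = 1 / (real p - 1)" using p1 by (simp add: t_def field_simps)
  have E: "1 / (real p - 1) \<le> 1" using p by simp
  show ?thesis unfolding gg_def theta_zero[OF assms] using A B C D E by linarith
qed

lemma gg_bound: assumes p: "real p \<ge> 2" and l: "lam > 0" shows "\<bar>gg p lam\<bar> \<le> 1"
proof -
  define k where "k = \<lfloor>log (real p) lam\<rfloor>"
  have k: "real p powr k \<le> lam" "lam < real p powr (k + 1)"
    using floor_log_eq_powr_iff[of lam "real p" k] l p k_def by auto
  have pk: "real p powr k > 0" using p by simp
  define mu where "mu = lam / real p powr k"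
  have "real p powr (k+1) = real p powr k * real p" using p by (simp add: powr_add)
  hence mu: "1 \<le> mu" "mu \<le> real p" using k pk by (auto simp: mu_def field_simps)
  have "gg p lam = gg p mu"
  proof (cases "k \<ge> 0")
    case True
    have "real p powr k = real p ^ nat k" using p True
      by (metis of_nat_nat powr_realpow of_int_of_nat_eq less_le_trans zero_less_numeral nat_0_le)
    hence "lam = real p ^ nat k * mu" using pk p by (simp add: mu_def)
    thus ?thesis using gg_pow[OF p, of mu "nat k"] mu by simp
  next
    case False
    have "real p powr (- k) = real p ^ nat (-k)" using p False
      by (metis of_nat_nat powr_realpow of_int_minus of_int_of_nat_eq less_le_trans zero_less_numeral neg_0_le_iff_le linorder_not_le less_imp_le)
    moreover have "real p powr (- k) = 1 / real p powr k" by (simp add: powr_minus divide_inverse)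
    ultimately have "mu = real p ^ nat (-k) * lam" by (simp add: mu_def)
    thus ?thesis using gg_pow[OF p l, of "nat (-k)"] by simp
  qed
  thus ?thesis using gg_base[OF p mu] by simp
qed

theorem lemma5p10:
  fixes p :: nat
  assumes "prime p"
  shows
   "(convex_on {0<..} (f_plus p) \<and> continuous_on {0<..} (f_plus p) \<and>
     piecewise_affine_slopes_in (Hp p) {0<..} (f_plus p) \<and>
     convex_on {0<..} (f_minus p) \<and> continuous_on {0<..} (f_minus p) \<and>
     piecewise_affine_slopes_in (Hp p) {0<..} (f_minus p) \<and>
     (\<forall>lam::real. lam > 0 \<longrightarrow> f_plus p (real p * lam) - f_plus p lam = - max 0 (1 - lam)) \<and>
     (\<forall>lam::real. lam > 0 \<longrightarrow> f_minus p (real p * lam) - f_minus p lam = max 0 (lam - 1)))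
  \<and> (convex_on {0<..} (theta p) \<and> continuous_on {0<..} (theta p) \<and>
     piecewise_affine_slopes_in (Hp p) {0<..} (theta p) \<and>
     (\<forall>lam::real. lam > 0 \<longrightarrow> theta p (real p * lam) = theta p lam + lam - 1))
  \<and> (\<forall>lam::real. lam > 0 \<longrightarrow> \<bar>theta p lam - (lam / (real p - 1) - ln lam / ln (real p))\<bar> \<le> 1)"
  proof -
  have p: "real p \<ge> 2" using prime_ge_2_nat[OF assms] by simp
  have cp: "convex_on {0<..} (f_plus p)" by (rule fplus_cvx[OF p])
  have cm: "convex_on {0<..} (f_minus p)" by (rule fminus_cvx[OF p])
  have th: "theta p = (\<lambda>x. f_plus p x + f_minus p x)" by (rule ext) (simp add: theta_def)
  have ct: "convex_on {0<..} (theta p)" unfolding th using cp cm by (rule convex_on_add)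
  have op: "open ({0<..} :: real set)" by simp
  have hadd: "\<And>x y. x \<in> Hp p \<Longrightarrow> y \<in> Hp p \<Longrightarrow> x + y \<in> Hp p" using Hp_add p by auto
  have pap: "piecewise_affine_slopes_in (Hp p) {0<..} (f_plus p)"
    by (rule pa_gen[of "Q p"]) (use Q_fin[OF p] fplus_aff[OF p] in auto)
  have pam: "piecewise_affine_slopes_in (Hp p) {0<..} (f_minus p)"
    by (rule pa_gen[of "Q p"]) (use Q_fin[OF p] fminus_aff[OF p] in auto)
  have pat: "piecewise_affine_slopes_in (Hp p) {0<..} (theta p)"
    unfolding th
    by (rule pa_gen[of "Q p"]) (use Q_fin[OF p] fminus_aff[OF p] fplus_aff[OF p] aff_add hadd in auto)
  have bd: "\<forall>lam::real. lam > 0 \<longrightarrow> \<bar>theta p lam - (lam / (real p - 1) - ln lam / ln (real p))\<bar> \<le> 1"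
    using gg_bound[OF p] unfolding gg_def by auto
  show ?thesis
    using cp cm ct pap pam pat bd fplus_eq[OF p] fminus_eq[OF p] theta_eq[OF p]
      convex_on_continuous[OF op cp] convex_on_continuous[OF op cm] convex_on_continuous[OF op ct]
    by auto
qed

end
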